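(* Let $G=(V,E)$ be a graph of order $n$ such that $\frac{n}{2}<\tau(G)=\tau=n-k$, and let $W$ be its $\tau$-set. If $G[W]\cong K_\tau$, then $\beta_p(G)\le n-\frac{k}{2}$.
   Context: All graphs are finite, simple, undirected and connected. Two vertices $u,v$ are twins if $N(u)\setminus\{v\}=N(v)\setminus\{u\}$; twin classes are the equivalence classes of this relation, and the twin number $\tau(G)$ is the maximum cardinality of a twin class. A $\tau$-set is a set of pairwise twin vertices of cardinality $\tau(G)$. For a partition $\Pi=\{S_1,\dots,S_k\}$ of $V(G)$, $r(u|\Pi)=(d(u,S_1),\dots,d(u,S_k))$ with $d(u,S)=\min_{w\in S}d(u,w)$; $\Pi$ is locating if $r(u|\Pi)\ne r(v|\Pi)$ for all distinct $u,v$; $\beta_p(G)$ is the minimum size of a locating partition. *)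

theory Defs
  imports Complex_Main "HOL-Library.Disjoint_Sets"
begin

definition graph :: "'a set \<Rightarrow> ('a \<Rightarrow> 'a \<Rightarrow> bool) \<Rightarrow> bool" where
  "graph V E \<longleftrightarrow> finite V \<and> V \<noteq> {} \<and>
     (\<forall>u v. E u v \<longrightarrow> u \<in> V \<and> v \<in> V) \<and>
     (\<forall>u v. E u v \<longrightarrow> E v u) \<and> (\<forall>u. \<not> E u u)"

definition edge_rel :: "('a \<Rightarrow> 'a \<Rightarrow> bool) \<Rightarrow> ('a \<times> 'a) set" where
  "edge_rel E = {(u, v). E u v}"

definition connected_graph :: "'a set \<Rightarrow> ('a \<Rightarrow> 'a \<Rightarrow> bool) \<Rightarrow> bool" where
  "connected_graph V E \<longleftrightarrow> graph V E \<and>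
     (\<forall>u\<in>V. \<forall>v\<in>V. (u, v) \<in> (edge_rel E)\<^sup>*)"

definition dist :: "('a \<Rightarrow> 'a \<Rightarrow> bool) \<Rightarrow> 'a \<Rightarrow> 'a \<Rightarrow> nat" where
  "dist E u v = (LEAST k. (u, v) \<in> (edge_rel E) ^^ k)"

definition setdist :: "('a \<Rightarrow> 'a \<Rightarrow> bool) \<Rightarrow> 'a \<Rightarrow> 'a set \<Rightarrow> nat" where
  "setdist E u S = Min (dist E u ` S)"

definition nbhd :: "'a set \<Rightarrow> ('a \<Rightarrow> 'a \<Rightarrow> bool) \<Rightarrow> 'a \<Rightarrow> 'a set" where
  "nbhd V E u = {w \<in> V. E u w}"

definition twins :: "'a set \<Rightarrow> ('a \<Rightarrow> 'a \<Rightarrow> bool) \<Rightarrow> 'a \<Rightarrow> 'a \<Rightarrow> bool" where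
  "twins V E u v \<longleftrightarrow> u \<in> V \<and> v \<in> V \<and> nbhd V E u - {v} = nbhd V E v - {u}"

definition twin_class :: "'a set \<Rightarrow> ('a \<Rightarrow> 'a \<Rightarrow> bool) \<Rightarrow> 'a \<Rightarrow> 'a set" where
  "twin_class V E u = {v \<in> V. twins V E u v}"

definition twin_number :: "'a set \<Rightarrow> ('a \<Rightarrow> 'a \<Rightarrow> bool) \<Rightarrow> nat" where
  "twin_number V E = Max ((\<lambda>u. card (twin_class V E u)) ` V)"

definition tau_set :: "'a set \<Rightarrow> ('a \<Rightarrow> 'a \<Rightarrow> bool) \<Rightarrow> 'a set \<Rightarrow> bool" where
  "tau_set V E W \<longleftrightarrow> W \<subseteq> V \<and> (\<forall>u\<in>W. \<forall>v\<in>W. twins V E u v) \<and>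
     card W = twin_number V E"

text \<open>Locating partition (the order of the parts is irrelevant for locating-ness).\<close>
definition locating_partition :: "'a set \<Rightarrow> ('a \<Rightarrow> 'a \<Rightarrow> bool) \<Rightarrow> 'a set set \<Rightarrow> bool" where
  "locating_partition V E P \<longleftrightarrow> partition_on V P \<and>
     (\<forall>u\<in>V. \<forall>v\<in>V. u \<noteq> v \<longrightarrow> (\<exists>S\<in>P. setdist E u S \<noteq> setdist E v S))"

definition partition_dimension :: "'a set \<Rightarrow> ('a \<Rightarrow> 'a \<Rightarrow> bool) \<Rightarrow> nat" where
  "partition_dimension V E = (LEAST k. \<exists>P. locating_partition V E P \<and> card P = k)"

definition induces_complete :: "('a \<Rightarrow> 'a \<Rightarrow> bool) \<Rightarrow> 'a set \<Rightarrow> bool" where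
  "induces_complete E W \<longleftrightarrow> (\<forall>u\<in>W. \<forall>v\<in>W. u \<noteq> v \<longrightarrow> E u v)"

end

theory Submission
  imports Defs
begin

lemma dist_exists:
  assumes "connected_graph V E" "u \<in> V" "v \<in> V"
  shows "\<exists>k. (u, v) \<in> (edge_rel E) ^^ k"
  using assms unfolding connected_graph_def by (simp add: rtrancl_power)

lemma dist_eq0:
  assumes "connected_graph V E" "u \<in> V" "v \<in> V"
  shows "dist E u v = 0 \<longleftrightarrow> u = v"
proof
  assume h: "dist E u v = 0"
  from dist_exists[OF assms] have "(u, v) \<in> (edge_rel E) ^^ dist E u v"
    unfolding dist_def by (rule LeastI_ex)
  with h show "u = v" by simp
next
  assume "u = v"
  then have "(u, v) \<in> (edge_rel E) ^^ 0" by simp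
  then show "dist E u v = 0" unfolding dist_def
    by (metis (mono_tags, lifting) Least_le le_zero_eq)
qed

lemma dist_eq1:
  assumes "connected_graph V E" "u \<in> V" "v \<in> V"
  shows "dist E u v = 1 \<longleftrightarrow> E u v"
proof
  assume h: "dist E u v = 1"
  from dist_exists[OF assms] have "(u, v) \<in> (edge_rel E) ^^ dist E u v"
    unfolding dist_def by (rule LeastI_ex)
  with h show "E u v" by (simp add: edge_rel_def)
next
  assume e: "E u v"
  then have "u \<noteq> v" using assms(1) unfolding connected_graph_def graph_def by auto
  then have "dist E u v \<noteq> 0" using dist_eq0[OF assms] by simp
  moreover from e have "(u, v) \<in> (edge_rel E) ^^ 1" by (simp add: edge_rel_def)
  then have "dist E u v \<le> 1" unfolding dist_def by (rule Least_le)
  ultimately show "dist E u v = 1" by simp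
qed

lemma setdist_eq0:
  assumes "connected_graph V E" "x \<in> V" "finite S" "S \<noteq> {}" "S \<subseteq> V"
  shows "setdist E x S = 0 \<longleftrightarrow> x \<in> S"
proof -
  have fin: "finite (dist E x ` S)" "dist E x ` S \<noteq> {}" using assms by auto
  have "setdist E x S = 0 \<longleftrightarrow> 0 \<in> dist E x ` S"
    unfolding setdist_def
    by (metis Min_in Min_le fin le_zero_eq)
  also have "\<dots> \<longleftrightarrow> x \<in> S"
    using dist_eq0[OF assms(1) assms(2)] assms(5) by (auto simp: image_iff)
  finally show ?thesis .
qed

lemma setdist_single: "setdist E x {z} = dist E x z"
  by (simp add: setdist_def)

theorem theorem16:
  fixes V :: "'a set" and E :: "'a \<Rightarrow> 'a \<Rightarrow> bool" and W :: "'a set" and n k :: nat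
  assumes "connected_graph V E"
    and "n = card V"
    and "real n / 2 < real (twin_number V E)"
    and "twin_number V E = n - k"
    and "tau_set V E W"
    and "induces_complete E W"
  shows "real (partition_dimension V E) \<le> real n - real k / 2"
proof -
  note cg = assms(1)
  have gr: "graph V E" using cg unfolding connected_graph_def by simp
  have finV: "finite V" using gr unfolding graph_def by simp
  have Ein: "\<And>u v. E u v \<Longrightarrow> u \<in> V \<and> v \<in> V" using gr unfolding graph_def by blast
  have Esym: "\<And>u v. E u v \<longleftrightarrow> E v u" using gr unfolding graph_def by blast
  have Eirr: "\<And>u. \<not> E u u" using gr unfolding graph_def by blast
  define \<tau> where "\<tau> = twin_number V E"
  have WV: "W \<subseteq> V" and twW: "\<forall>u\<in>W. \<forall>v\<in>W. twins V E u v" and cardW: "card W = \<tau>"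
    using assms(5) unfolding tau_set_def \<tau>_def by auto
  have finW: "finite W" using WV finV finite_subset by blast
  define U where "U = V - W"
  have finU: "finite U" using finV U_def by simp
  have kn: "k < n" using assms(3,4) by (cases "k < n") auto
  have tau_eq: "\<tau> = n - k" using assms(4) \<tau>_def by simp
  have cardU: "card U = k" unfolding U_def using card_Diff_subset[OF finW WV] cardW tau_eq assms(2) kn
    by simp
  have k_tau: "k < \<tau>" using assms(3) tau_eq kn \<tau>_def by linarith
  have "W \<noteq> {}" using k_tau cardW by auto
  then obtain w1 where w1: "w1 \<in> W" by blast
  have compl: "\<And>u v. u \<in> W \<Longrightarrow> v \<in> W \<Longrightarrow> u \<noteq> v \<Longrightarrow> E u v"
    using assms(6) unfolding induces_complete_def by blast
  have unif: "\<And>w w' z. w \<in> W \<Longrightarrow> w' \<in> W \<Longrightarrow> z \<notin> W \<Longrightarrow> E w z = E w' z"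
  proof -
    fix w w' z assume a: "w \<in> W" "w' \<in> W" "z \<notin> W"
    have "nbhd V E w - {w'} = nbhd V E w' - {w}" using twW a unfolding twins_def by blast
    then have "z \<in> nbhd V E w - {w'} \<longleftrightarrow> z \<in> nbhd V E w' - {w}" by simp
    then show "E w z = E w' z" using a Ein unfolding nbhd_def by auto
  qed
  define A where "A = {u \<in> U. \<forall>w\<in>W. E u w}"
  define rel where "rel = (\<lambda>u z. z \<in> U \<and> z \<noteq> u \<and> (E u z \<noteq> E w1 z))"
  have AU: "A \<subseteq> U" unfolding A_def by auto
  have nontwin: "\<And>u. u \<in> A \<Longrightarrow> \<exists>z. rel u z"
  proof -
    fix u assume uA: "u \<in> A"
    then have uV: "u \<in> V" and uW: "u \<notin> W" unfolding A_def U_def by auto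
    have "\<not> twins V E w1 u"
    proof
      assume tw: "twins V E w1 u"
      have sub: "insert u W \<subseteq> twin_class V E w1"
        using tw twW w1 WV uV unfolding twin_class_def by auto
      have fin: "finite (twin_class V E w1)" using finV unfolding twin_class_def by simp
      have "card (insert u W) \<le> card (twin_class V E w1)" using card_mono[OF fin sub] .
      moreover have "card (insert u W) = \<tau> + 1" using uW finW cardW by simp
      moreover have "card (twin_class V E w1) \<le> \<tau>"
        unfolding \<tau>_def twin_number_def using finV w1 WV by (intro Max_ge) auto
      ultimately show False by simp
    qed
    then have "nbhd V E w1 - {u} \<noteq> nbhd V E u - {w1}" using uV w1 WV unfolding twins_def by auto
    then obtain z where z: "z \<in> V" "z \<noteq> u" "z \<noteq> w1" "E u z \<noteq> E w1 z"
      unfolding nbhd_def using Eirr by blast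
    have "z \<notin> W"
    proof
      assume "z \<in> W"
      then have "E w1 z" "E u z" using compl w1 z(3) uA Esym unfolding A_def by auto
      then show False using z(4) by simp
    qed
    then show "\<exists>z. rel u z" unfolding rel_def U_def using z by auto
  qed
  have relsym: "\<And>u z. u \<in> A \<Longrightarrow> z \<in> A \<Longrightarrow> rel u z \<Longrightarrow> rel z u"
  proof -
    fix u z assume uA: "u \<in> A" and zA: "z \<in> A" and r: "rel u z"
    have "E w1 u" "E w1 z" using uA zA w1 Esym unfolding A_def by auto
    then show "rel z u" using r uA AU Esym unfolding rel_def by auto
  qed
  define dom where "dom = (\<lambda>D. D \<subseteq> U \<and> (\<forall>u\<in>A - D. \<exists>z\<in>D. rel u z))"
  have "dom U" unfolding dom_def using AU by auto
  then obtain D where dD: "dom D" and Dmin: "\<And>D'. dom D' \<Longrightarrow> card D \<le> card D'"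
    using ex_has_least_nat[of dom U card] by blast
  have DU: "D \<subseteq> U" using dD unfolding dom_def by simp
  have dD2: "dom (U - D)"
    unfolding dom_def
  proof (intro conjI ballI)
    show "U - D \<subseteq> U" by blast
  next
    fix u assume "u \<in> A - (U - D)"
    then have uA: "u \<in> A" and uD: "u \<in> D" using AU by auto
    show "\<exists>z\<in>U - D. rel u z"
    proof (rule ccontr)
      assume nz: "\<not> (\<exists>z\<in>U - D. rel u z)"
      have "dom (D - {u})"
        unfolding dom_def
      proof (intro conjI ballI)
        show "D - {u} \<subseteq> U" using DU by blast
      next
        fix v assume v: "v \<in> A - (D - {u})"
        show "\<exists>z\<in>D - {u}. rel v z"
        proof (cases "v = u")
          case True
          obtain z where "rel u z" using nontwin uA by blast
          then show ?thesis using True nz unfolding rel_def by auto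
        next
          case False
          then have "v \<in> A - D" using v by auto
          then obtain z where z: "z \<in> D" "rel v z" using dD unfolding dom_def by blast
          have "z \<noteq> u"
          proof
            assume "z = u"
            then have "rel u v" using relsym z(2) uA \<open>v \<in> A - D\<close> by blast
            moreover have "v \<in> U - D" using \<open>v \<in> A - D\<close> AU by auto
            ultimately show False using nz by blast
          qed
          then show ?thesis using z by blast
        qed
      qed
      then have "card D \<le> card (D - {u})" by (rule Dmin)
      moreover have "card (D - {u}) < card D"
        using uD DU finU by (meson card_Diff1_less finite_subset)
      ultimately show False by simp
    qed
  qed
  have cardsum: "card D + card (U - D) = k"
    using cardU DU finU by (metis card_Diff_subset card_mono finite_subset le_add_diff_inverse)
  obtain T where dT: "dom T" and cT: "2 * card T \<le> k"
  proof (cases "card D \<le> card (U - D)")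
    case True then show ?thesis using that[OF dD] cardsum by simp
  next
    case False then show ?thesis using that[OF dD2] cardsum by simp
  qed
  have TU: "T \<subseteq> U" using dT unfolding dom_def by simp
  define M where "M = U - T"
  have finM: "finite M" using finU M_def by simp
  have cardM: "card M = k - card T" unfolding M_def using card_Diff_subset[OF finite_subset[OF TU finU] TU] cardU
    by simp
  have cM2: "k \<le> 2 * card M" using cardM cT by simp
  have cMk: "card M \<le> k" using cardM by simp
  have Mwit: "\<And>u. u \<in> M \<Longrightarrow> u \<in> A \<Longrightarrow> \<exists>z\<in>T. rel u z"
    using dT unfolding dom_def M_def by blast
  obtain f where fM: "f ` M \<subseteq> W" and finj: "inj_on f M"
    using card_le_inj[OF finM finW] cMk k_tau cardW by auto
  have cfM: "card (f ` M) = card M" using card_image[OF finj] .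
  have "f ` M \<noteq> W" using cfM cMk k_tau cardW by auto
  then obtain w0 where w0: "w0 \<in> W" "w0 \<notin> f ` M" using fM by blast
  have MU: "M \<subseteq> U" unfolding M_def by blast
  have MV: "M \<subseteq> V" and MW: "M \<inter> W = {}" using MU unfolding U_def by auto
  define q where "q = (\<lambda>x. if x \<in> f ` M then the_inv_into M f x else x)"
  have qM: "\<And>x. x \<in> M \<Longrightarrow> q x = x" using fM MW unfolding q_def by auto
  have qf: "\<And>u. u \<in> M \<Longrightarrow> q (f u) = u" unfolding q_def using the_inv_into_f_f[OF finj] by auto
  have qo: "\<And>x. x \<notin> f ` M \<Longrightarrow> q x = x" unfolding q_def by auto
  have fW: "\<And>x. x \<in> f ` M \<Longrightarrow> x \<in> W" using fM by blast
  have qV: "\<And>x. x \<in> V \<Longrightarrow> q x \<in> V - f ` M"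
  proof -
    fix x assume x: "x \<in> V"
    show "q x \<in> V - f ` M"
    proof (cases "x \<in> f ` M")
      case True
      then obtain u where "u \<in> M" "x = f u" by blast
      then show ?thesis using qf MV MW fW by auto
    next
      case False then show ?thesis using qo x by simp
    qed
  qed
  define R where "R = V - f ` M"
  define fib where "fib = (\<lambda>r. {y \<in> V. q y = r})"
  define P where "P = fib ` R"
  have qR: "\<And>r. r \<in> R \<Longrightarrow> q r = r" using qo unfolding R_def by simp
  have rfib: "\<And>r. r \<in> R \<Longrightarrow> r \<in> fib r" using qR unfolding fib_def R_def by auto
  have finR: "finite R" using finV R_def by simp
  have injfib: "inj_on fib R"
    by (rule inj_onI) (metis (mono_tags, lifting) fib_def mem_Collect_eq rfib)
  have cardP: "card P = n - card M"
  proof -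
    have "card P = card R" unfolding P_def using card_image[OF injfib] .
    have fMV: "f ` M \<subseteq> V" using fM WV by blast
    have "card R = card V - card (f ` M)" unfolding R_def
      using card_Diff_subset[OF finite_imageI[OF finM] fMV] .
    then have "card P = card V - card (f ` M)" using \<open>card P = card R\<close> by simp
    then show ?thesis using cfM assms(2) by simp
  qed
  have finfib: "\<And>r. finite (fib r)" using finV unfolding fib_def by simp
  have fibV: "\<And>r. fib r \<subseteq> V" unfolding fib_def by auto
  have part: "partition_on V P"
    unfolding partition_on_def
  proof (intro conjI)
    show "\<Union> P = V"
    proof
      show "\<Union> P \<subseteq> V" using fibV unfolding P_def by auto
      show "V \<subseteq> \<Union> P"
      proof
        fix x assume x: "x \<in> V"
        then have "q x \<in> R" using qV R_def by simp
        moreover have "x \<in> fib (q x)" using x unfolding fib_def by simp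
        ultimately show "x \<in> \<Union> P" unfolding P_def by blast
      qed
    qed
    have "\<And>a b. fib a \<inter> fib b \<noteq> {} \<Longrightarrow> fib a = fib b" unfolding fib_def by auto
    then show "disjoint P" unfolding P_def disjoint_def pairwise_def disjnt_def by blast
    show "{} \<notin> P" using rfib unfolding P_def by auto
  qed
  have loc: "locating_partition V E P"
    unfolding locating_partition_def
  proof (intro conjI ballI impI part)
    fix x y assume x: "x \<in> V" and y: "y \<in> V" and xy: "x \<noteq> y"
    have qxR: "q x \<in> R" using qV x R_def by simp
    have S0: "\<And>r z. r \<in> R \<Longrightarrow> z \<in> V \<Longrightarrow> setdist E z (fib r) = 0 \<longleftrightarrow> z \<in> fib r"
    proof -
      fix r z assume r: "r \<in> R" and z: "z \<in> V"
      have "fib r \<noteq> {}" using rfib[OF r] by blast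
      then show "setdist E z (fib r) = 0 \<longleftrightarrow> z \<in> fib r"
        using setdist_eq0[OF cg z finfib[of r] _ fibV[of r]] by blast
    qed
    show "\<exists>S\<in>P. setdist E x S \<noteq> setdist E y S"
    proof (cases "q x = q y")
      case False
      have "x \<in> fib (q x)" "y \<notin> fib (q x)" using x False unfolding fib_def by auto
      then have "setdist E x (fib (q x)) \<noteq> setdist E y (fib (q x))"
        using S0[OF qxR x] S0[OF qxR y] by simp
      then show ?thesis using qxR unfolding P_def by blast
    next
      case True
      obtain u where uM: "u \<in> M" and xyu: "{x, y} = {u, f u}"
      proof (cases "x \<in> f ` M")
        case xf: True
        then obtain u where u: "u \<in> M" "x = f u" by blast
        then have "q y = u" using True qf by simp
        have "y = u"
        proof (cases "y \<in> f ` M")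
          case True
          then obtain u' where "u' \<in> M" "y = f u'" by blast
          then show ?thesis using \<open>q y = u\<close> qf u xy by simp
        next
          case False then show ?thesis using \<open>q y = u\<close> qo by simp
        qed
        then show ?thesis using that u by blast
      next
        case xf: False
        then have qx: "q x = x" using qo by simp
        show ?thesis
        proof (cases "y \<in> f ` M")
          case yf: True
          then obtain u where u: "u \<in> M" "y = f u" by blast
          then have "x = u" using True qf qx by simp
          then show ?thesis using that u by blast
        next
          case False
          then show ?thesis using qx qo True xy by simp
        qed
      qed
      have uU: "u \<in> U" using uM MU by blast
      have fuW: "f u \<in> W" using uM fM by blast
      obtain z where zR: "z \<in> R" "z \<notin> M" and zV: "z \<in> V" and zu: "z \<noteq> u" "z \<noteq> f u"
        and Ez: "E u z \<noteq> E (f u) z"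
      proof (cases "u \<in> A")
        case True
        then obtain z where z: "z \<in> T" "rel u z" using Mwit uM by blast
        have zU: "z \<in> U" using z TU by blast
        then have zW: "z \<notin> W" unfolding U_def by simp
        have "E u z \<noteq> E (f u) z" using z(2) unif[OF w1 fuW zW] unfolding rel_def by simp
        moreover have "z \<in> R" using zU zW fW unfolding R_def U_def by blast
        moreover have "z \<notin> M" using z(1) unfolding M_def by blast
        moreover have "z \<in> V" "z \<noteq> u" "z \<noteq> f u" using zU z(2) zW fuW unfolding U_def rel_def by auto
        ultimately show ?thesis using that by blast
      next
        case False
        then obtain w where w: "w \<in> W" "\<not> E u w" using uU unfolding A_def by auto
        have uW: "u \<notin> W" using uU U_def by simp
        have "E w u = E w0 u" using unif[OF w(1) w0(1) uW] .
        then have n1: "\<not> E u w0" using w(2) Esym[of u w] Esym[of u w0] by simp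
        have fuw0: "f u \<noteq> w0" using w0(2) uM by blast
        have n2: "E (f u) w0" using compl[OF fuW w0(1) fuw0] .
        have n3: "w0 \<in> R" using w0 WV unfolding R_def by blast
        have n4: "w0 \<notin> M" "w0 \<in> V" "w0 \<noteq> u" using w0(1) MW WV uW by auto
        show ?thesis using that[OF n3 n4(1) n4(2) n4(3) fuw0[symmetric]] n1 n2 by simp
      qed
      have fibz: "fib z = {z}"
      proof -
        have "y' = z" if "y' \<in> V" "q y' = z" for y'
        proof (cases "y' \<in> f ` M")
          case True
          then obtain u' where "u' \<in> M" "y' = f u'" by blast
          then show ?thesis using that qf zR by auto
        next
          case False then show ?thesis using that qo by simp
        qed
        then show ?thesis using rfib[OF zR(1)] unfolding fib_def by auto
      qed
      have fuV: "f u \<in> V" using fuW WV by blast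
      have uV: "u \<in> V" using uU U_def by simp
      have "setdist E u (fib z) \<noteq> setdist E (f u) (fib z)"
        unfolding fibz setdist_single using dist_eq1[OF cg uV zV] dist_eq1[OF cg fuV zV] Ez by (cases "E u z") auto
      then have "setdist E x (fib z) \<noteq> setdist E y (fib z)"
        using xyu xy unfolding doubleton_eq_iff by auto
      then show ?thesis using zR unfolding P_def by blast
    qed
  qed
  have "partition_dimension V E \<le> card P"
    unfolding partition_dimension_def using loc by (intro Least_le) blast
  then have "real (partition_dimension V E) \<le> real n - real (card M)"
    using cardP cMk kn by simp
  then show ?thesis using cM2 by simp
qed

end
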